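(* The elements $\mathsf{F}_{[t]}$, where $t$ runs over the set of unlabeled rooted trees, form a basis of the vector space $H_{\operatorname{NAP}}$.
   Context: $\Pi_{\operatorname{NAP}}(I)$ is the set of forests of rooted trees with vertex set exactly $I$, ordered by: $y$ covers $x$ iff $y$ is obtained from $x$ by adding an edge from the root of one component of $x$ to the root of another component (the latter root remaining the root); $\widehat{0}$ is the forest of one-vertex trees. For a rooted tree $t$ on $I$, $[\widehat{0},t]$ is an interval in $\Pi_{\operatorname{NAP}}(I)$, whose isomorphism class depends only on the unlabeled tree underlying $t$. $H_{\operatorname{NAP}}$ is the incidence Hopf algebra (Schmitt's construction) of this family: it has a basis $\mathsf{F}_{[Q]}$ indexed by isomorphism classes of finite products $Q$ of posets $[\widehat{0},t]$ ($t$ rooted trees), product $\mathsf{F}_{[Q]}\mathsf{F}_{[Q']}=\mathsf{F}_{[Q\times Q']}$, unit the class of the one-element poset, coproduct $\Delta\mathsf{F}_{[Q]}=\sum_{x\in Q}\mathsf{F}_{[\widehat{0},x]}\otimes\mathsf{F}_{[x,\widehat{1}]}$. We write $\mathsf{F}_{[t]}=\mathsf{F}_{[[\widehat{0},t]]}$. *)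

theory Defs
  imports Main HOL.Vector_Spaces "HOL-Library.Function_Algebras"
begin

text \<open>A forest on I is given by its set of edges (child, parent).\<close>
type_synonym forest = "(nat \<times> nat) set"

definition is_forest :: "nat set \<Rightarrow> forest \<Rightarrow> bool" where
  "is_forest I F \<longleftrightarrow> finite I \<and> F \<subseteq> I \<times> I
     \<and> (\<forall>c p q. (c, p) \<in> F \<longrightarrow> (c, q) \<in> F \<longrightarrow> p = q)
     \<and> acyclic F"

definition roots :: "nat set \<Rightarrow> forest \<Rightarrow> nat set" where
  "roots I F = {v \<in> I. \<not> (\<exists>p. (v, p) \<in> F)}"

definition is_rooted_tree :: "nat set \<Rightarrow> forest \<Rightarrow> bool" where
  "is_rooted_tree I F \<longleftrightarrow> is_forest I F \<and> card (roots I F) = 1"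

text \<open>Covering relation of Pi_NAP(I): add an edge from the root r1 of one component
  to the root r2 of another component (distinct roots lie in distinct components);
  r2 remains a root.\<close>
definition nap_cover :: "nat set \<Rightarrow> forest \<Rightarrow> forest \<Rightarrow> bool" where
  "nap_cover I x y \<longleftrightarrow> is_forest I x \<and>
     (\<exists>r1 r2. r1 \<in> roots I x \<and> r2 \<in> roots I x \<and> r1 \<noteq> r2 \<and> y = insert (r1, r2) x)"

definition nap_le :: "nat set \<Rightarrow> forest \<Rightarrow> forest \<Rightarrow> bool" where
  "nap_le I x y \<longleftrightarrow> is_forest I x \<and> is_forest I y \<and> (nap_cover I)\<^sup>*\<^sup>* x y"

type_synonym 'a poset = "'a set \<times> ('a \<Rightarrow> 'a \<Rightarrow> bool)"

text \<open>The interval [0, t] in Pi_NAP(I) (0, the forest of one-vertex trees, is the minimum).\<close>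
definition nap_interval :: "nat set \<Rightarrow> forest \<Rightarrow> forest poset" where
  "nap_interval I t = ({x. nap_le I x t}, nap_le I)"

definition prod_posets :: "'a poset list \<Rightarrow> 'a list poset" where
  "prod_posets Ps =
    ({xs. length xs = length Ps \<and> (\<forall>i<length Ps. xs ! i \<in> fst (Ps ! i))},
     (\<lambda>xs ys. \<forall>i<length Ps. snd (Ps ! i) (xs ! i) (ys ! i)))"

definition poset_iso :: "'a poset \<Rightarrow> 'b poset \<Rightarrow> bool" where
  "poset_iso P Q \<longleftrightarrow> (\<exists>f. bij_betw f (fst P) (fst Q) \<and>
     (\<forall>x\<in>fst P. \<forall>y\<in>fst P. snd P x y \<longleftrightarrow> snd Q (f x) (f y)))"

definition iso_class :: "'a poset \<Rightarrow> 'a poset set" where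
  "iso_class P = {Q. poset_iso P Q}"

text \<open>Finite products of intervals [0,t], t rooted trees (empty product = one-element poset).\<close>
definition nap_products :: "forest list poset set" where
  "nap_products = {prod_posets (map (\<lambda>(I, t). nap_interval I t) ts) | ts.
                     \<forall>(I, t) \<in> set ts. is_rooted_tree I t}"

definition nap_classes :: "forest list poset set set" where
  "nap_classes = iso_class ` nap_products"

definition H_NAP :: "(forest list poset set \<Rightarrow> 'k::field) set" where
  "H_NAP = {f. finite {c. f c \<noteq> 0} \<and> {c. f c \<noteq> 0} \<subseteq> nap_classes}"

definition scaleH :: "'k::field \<Rightarrow> ('c \<Rightarrow> 'k) \<Rightarrow> ('c \<Rightarrow> 'k)" where
  "scaleH a f = (\<lambda>x. a * f x)"

definition Fbasis :: "forest list poset set \<Rightarrow> (forest list poset set \<Rightarrow> 'k::field)" where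
  "Fbasis c = (\<lambda>d. if d = c then 1 else 0)"

definition Ftree :: "nat set \<Rightarrow> forest \<Rightarrow> (forest list poset set \<Rightarrow> 'k::field)" where
  "Ftree I t = Fbasis (iso_class (prod_posets [nap_interval I t]))"

definition tree_iso :: "nat set \<Rightarrow> forest \<Rightarrow> nat set \<Rightarrow> forest \<Rightarrow> bool" where
  "tree_iso I t J s \<longleftrightarrow> (\<exists>f. bij_betw f I J \<and> s = map_prod f f ` t)"

end

theory Submission
  imports Defs
begin


definition Dn :: "forest \<Rightarrow> forest set" where
  "Dn t = {x. x \<subseteq> t \<and> (\<forall>c p g. (c,p) \<in> t \<longrightarrow> (p,g) \<in> x \<longrightarrow> (c,p) \<in> x)}"

lemma forest_subset: "is_forest I t \<Longrightarrow> x \<subseteq> t \<Longrightarrow> is_forest I x"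
  unfolding is_forest_def by (meson acyclic_subset order_trans subsetD)

lemma forest_finite: "is_forest I t \<Longrightarrow> finite t"
  unfolding is_forest_def by (meson finite_SigmaI finite_subset)

lemma chain_inv:
  assumes "(nap_cover I)\<^sup>*\<^sup>* x y"
  shows "x \<subseteq> y \<and> (\<forall>c p g. (c,p) \<in> y \<longrightarrow> (c,p) \<notin> x \<longrightarrow> (p,g) \<notin> x)"
  using assms
proof (induction rule: rtranclp_induct)
  case base then show ?case by auto
next
  case (step y z)
  then obtain r1 r2 where r: "r1 \<in> roots I y" "r2 \<in> roots I y" "z = insert (r1,r2) y"
    unfolding nap_cover_def by auto
  then show ?case using step.IH unfolding roots_def by auto
qed

definition Rel :: "forest \<Rightarrow> ((nat\<times>nat)\<times>(nat\<times>nat)) set" where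
  "Rel t = {(e',e). e' \<in> t \<and> e \<in> t \<and> snd e' = fst e}"

lemma Rel_trancl: "(a,b) \<in> (Rel t)\<^sup>+ \<Longrightarrow> (fst a, fst b) \<in> t\<^sup>+"
proof (induction rule: trancl_induct)
  case (base y) then show ?case unfolding Rel_def by (cases a) auto
next
  case (step y z) then show ?case unfolding Rel_def
    by (cases y) (auto intro: trancl_into_trancl)
qed

lemma Rel_wf:
  assumes "is_forest I t" shows "wf (Rel t)"
proof (rule finite_acyclic_wf)
  have "Rel t \<subseteq> t \<times> t" unfolding Rel_def by auto
  then show "finite (Rel t)" using forest_finite[OF assms] by (meson finite_SigmaI finite_subset)
  show "acyclic (Rel t)" unfolding acyclic_def
  proof (intro allI notI)
    fix e assume "(e,e) \<in> (Rel t)\<^sup>+"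
    then have "(fst e, fst e) \<in> t\<^sup>+" by (rule Rel_trancl)
    then show False using assms unfolding is_forest_def acyclic_def by blast
  qed
qed

lemma chain_build:
  assumes F: "is_forest I t"
  shows "x \<in> Dn t \<Longrightarrow> y \<in> Dn t \<Longrightarrow> x \<subseteq> y \<Longrightarrow> (nap_cover I)\<^sup>*\<^sup>* x y"
proof (induction "card (y - x)" arbitrary: x rule: less_induct)
  case less
  show ?case
  proof (cases "y - x = {}")
    case True then have "x = y" using less by auto
    then show ?thesis by simp
  next
    case False
    obtain e where e: "e \<in> y - x" and emin: "\<And>e'. (e',e) \<in> Rel t \<Longrightarrow> e' \<notin> y - x"
    proof -
      obtain e0 where "e0 \<in> y - x" using False by blast
      from wfE_min[OF Rel_wf[OF F] this] show ?thesis using that by blast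
    qed
    obtain c p where cp: "e = (c,p)" by (cases e)
    have yt: "y \<subseteq> t" "x \<subseteq> t" using less.prems unfolding Dn_def by auto
    have fn: "\<And>a b b'. (a,b) \<in> t \<Longrightarrow> (a,b') \<in> t \<Longrightarrow> b = b'"
      using F unfolding is_forest_def by blast
    have cpt: "(c,p) \<in> t" using e cp yt by auto
    have cI: "c \<in> I" "p \<in> I" using cpt F unfolding is_forest_def by auto
    have cnp: "c \<noteq> p" using cpt F unfolding is_forest_def acyclic_def by auto
    define x' where "x' = insert (c,p) x"
    have children: "\<And>c'. (c',c) \<in> t \<Longrightarrow> (c',c) \<in> x"
    proof -
      fix c' assume h: "(c',c) \<in> t"
      then have "(c',c) \<in> y" using less.prems(2) e cp unfolding Dn_def by blast
      moreover have "((c',c),e) \<in> Rel t" using h cpt cp unfolding Rel_def by auto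
      ultimately show "(c',c) \<in> x" using emin by blast
    qed
    have x'D: "x' \<in> Dn t"
      unfolding Dn_def
    proof (intro CollectI conjI allI impI)
      show "x' \<subseteq> t" using less.prems(1) cpt unfolding Dn_def x'_def by auto
      fix c' p' g assume h: "(c',p') \<in> t" "(p',g) \<in> x'"
      show "(c',p') \<in> x'"
      proof (cases "(p',g) = (c,p)")
        case True then show ?thesis using children h unfolding x'_def by auto
      next
        case False then have "(p',g) \<in> x" using h unfolding x'_def by auto
        then show ?thesis using h less.prems(1) unfolding Dn_def x'_def by auto
      qed
    qed
    have cr: "c \<in> roots I x"
      using cI e cp fn yt unfolding roots_def by blast
    have pr: "p \<in> roots I x"
      using cI cpt less.prems(1) e cp unfolding roots_def Dn_def by blast
    have cov: "nap_cover I x x'"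
      unfolding nap_cover_def x'_def using cr pr cnp forest_subset[OF F yt(2)] by blast
    have "x' \<subseteq> y" using less.prems e cp unfolding x'_def by auto
    moreover have "card (y - x') < card (y - x)"
    proof -
      have "finite (y - x')" using forest_finite[OF F] yt by (meson finite_Diff finite_subset)
      moreover have "y - x' = (y - x) - {e}" unfolding x'_def cp by auto
      ultimately show ?thesis using e by (metis card_Diff1_less finite_Diff2 finite.emptyI finite.insertI)
    qed
    ultimately have "(nap_cover I)\<^sup>*\<^sup>* x' y" using less.hyps x'D less.prems(2) by blast
    then show ?thesis using cov by (meson converse_rtranclp_into_rtranclp)
  qed
qed

lemma nap_le_Dn:
  assumes F: "is_forest I t" and x: "x \<in> Dn t" and y: "y \<in> Dn t"
  shows "nap_le I x y \<longleftrightarrow> x \<subseteq> y"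
proof
  assume "nap_le I x y" then show "x \<subseteq> y" unfolding nap_le_def using chain_inv by blast
next
  assume "x \<subseteq> y"
  moreover have "is_forest I x" "is_forest I y" using x y F forest_subset unfolding Dn_def by auto
  ultimately show "nap_le I x y" unfolding nap_le_def using chain_build[OF F x y] by blast
qed

lemma t_Dn: "t \<in> Dn t" unfolding Dn_def by auto

lemma interval_carrier:
  assumes F: "is_forest I t"
  shows "{x. nap_le I x t} = Dn t"
proof
  show "{x. nap_le I x t} \<subseteq> Dn t"
  proof
    fix x assume "x \<in> {x. nap_le I x t}"
    then have "(nap_cover I)\<^sup>*\<^sup>* x t" unfolding nap_le_def by auto
    from chain_inv[OF this] show "x \<in> Dn t" unfolding Dn_def by blast
  qed
  show "Dn t \<subseteq> {x. nap_le I x t}"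
    using nap_le_Dn[OF F _ t_Dn] unfolding Dn_def by auto
qed



lemma iso_refl: "poset_iso P P"
  unfolding poset_iso_def by (rule exI[of _ id]) auto

lemma iso_sym: assumes "poset_iso P Q" shows "poset_iso Q P"
proof -
  obtain f where f: "bij_betw f (fst P) (fst Q)"
    "\<forall>x\<in>fst P. \<forall>y\<in>fst P. snd P x y \<longleftrightarrow> snd Q (f x) (f y)"
    using assms unfolding poset_iso_def by blast
  let ?g = "inv_into (fst P) f"
  have g: "bij_betw ?g (fst Q) (fst P)" using f(1) by (rule bij_betw_inv_into)
  have "\<forall>x\<in>fst Q. \<forall>y\<in>fst Q. snd Q x y \<longleftrightarrow> snd P (?g x) (?g y)"
  proof (intro ballI)
    fix x y assume "x \<in> fst Q" "y \<in> fst Q"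
    then have "?g x \<in> fst P" "?g y \<in> fst P" "f (?g x) = x" "f (?g y) = y"
      using f(1) g by (auto simp: bij_betw_def f_inv_into_f inv_into_into)
    then show "snd Q x y \<longleftrightarrow> snd P (?g x) (?g y)" using f(2) by metis
  qed
  then show ?thesis using g unfolding poset_iso_def by blast
qed

lemma iso_trans: assumes "poset_iso P Q" "poset_iso Q R" shows "poset_iso P R"
proof -
  obtain f where f: "bij_betw f (fst P) (fst Q)"
    "\<forall>x\<in>fst P. \<forall>y\<in>fst P. snd P x y \<longleftrightarrow> snd Q (f x) (f y)"
    using assms unfolding poset_iso_def by blast
  obtain g where g: "bij_betw g (fst Q) (fst R)"
    "\<forall>x\<in>fst Q. \<forall>y\<in>fst Q. snd Q x y \<longleftrightarrow> snd R (g x) (g y)"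
    using assms unfolding poset_iso_def by blast
  have "bij_betw (g \<circ> f) (fst P) (fst R)" using f(1) g(1) by (rule bij_betw_trans)
  moreover have "\<forall>x\<in>fst P. \<forall>y\<in>fst P. snd P x y \<longleftrightarrow> snd R ((g\<circ>f) x) ((g\<circ>f) y)"
  proof (intro ballI)
    fix x y assume "x \<in> fst P" "y \<in> fst P"
    moreover then have "f x \<in> fst Q" "f y \<in> fst Q" using f(1) by (auto simp: bij_betw_def)
    ultimately show "snd P x y \<longleftrightarrow> snd R ((g\<circ>f) x) ((g\<circ>f) y)" using f(2) g(2) by simp
  qed
  ultimately show ?thesis unfolding poset_iso_def by blast
qed

lemma iso_class_eq: "iso_class P = iso_class Q \<longleftrightarrow> poset_iso P Q"
proof
  assume "iso_class P = iso_class Q"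
  then have "Q \<in> iso_class P" using iso_refl unfolding iso_class_def by blast
  then show "poset_iso P Q" unfolding iso_class_def by blast
next
  assume "poset_iso P Q"
  then show "iso_class P = iso_class Q" unfolding iso_class_def
    using iso_sym iso_trans by blast
qed

lemma prod_single: "poset_iso (prod_posets [P]) P"
  unfolding poset_iso_def
proof (intro exI[of _ hd] conjI)
  show "bij_betw hd (fst (prod_posets [P])) (fst P)"
    unfolding prod_posets_def
  proof (rule bij_betw_byWitness[of _ "\<lambda>x. [x]"])
    show "\<forall>a\<in>fst ({xs. length xs = length [P] \<and> (\<forall>i<length [P]. xs ! i \<in> fst ([P] ! i))},
            \<lambda>xs ys. \<forall>i<length [P]. snd ([P] ! i) (xs ! i) (ys ! i)). [hd a] = a"
      by (auto simp: length_Suc_conv)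
  qed (auto simp: length_Suc_conv)
  show "\<forall>x\<in>fst (prod_posets [P]). \<forall>y\<in>fst (prod_posets [P]).
          snd (prod_posets [P]) x y = snd P (hd x) (hd y)"
    unfolding prod_posets_def by (auto simp: length_Suc_conv)
qed

definition pairP :: "'a poset \<Rightarrow> 'b poset \<Rightarrow> ('a \<times> 'b) poset" where
  "pairP P Q = (fst P \<times> fst Q, \<lambda>(a,b) (c,d). snd P a c \<and> snd Q b d)"

lemma prod_cons: "poset_iso (prod_posets (P # Ps)) (pairP P (prod_posets Ps))"
  unfolding poset_iso_def
proof (intro exI[of _ "\<lambda>xs. (hd xs, tl xs)"] conjI)
  show "bij_betw (\<lambda>xs. (hd xs, tl xs)) (fst (prod_posets (P # Ps))) (fst (pairP P (prod_posets Ps)))"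
    unfolding prod_posets_def pairP_def
  proof (rule bij_betw_byWitness[of _ "\<lambda>(x,xs). x # xs"])
  qed (auto simp: length_Suc_conv nth_Cons split: nat.splits)
  show "\<forall>x\<in>fst (prod_posets (P # Ps)). \<forall>y\<in>fst (prod_posets (P # Ps)).
          snd (prod_posets (P # Ps)) x y = snd (pairP P (prod_posets Ps)) (hd x, tl x) (hd y, tl y)"
    unfolding prod_posets_def pairP_def
    by (auto simp: length_Suc_conv nth_Cons less_Suc_eq_0_disj split: nat.splits)
qed

lemma pair_cong: assumes "poset_iso P P'" "poset_iso Q Q'"
  shows "poset_iso (pairP P Q) (pairP P' Q')"
proof -
  obtain f where f: "bij_betw f (fst P) (fst P')"
    "\<forall>x\<in>fst P. \<forall>y\<in>fst P. snd P x y \<longleftrightarrow> snd P' (f x) (f y)"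
    using assms unfolding poset_iso_def by blast
  obtain g where g: "bij_betw g (fst Q) (fst Q')"
    "\<forall>x\<in>fst Q. \<forall>y\<in>fst Q. snd Q x y \<longleftrightarrow> snd Q' (g x) (g y)"
    using assms unfolding poset_iso_def by blast
  have "bij_betw (map_prod f g) (fst P \<times> fst Q) (fst P' \<times> fst Q')"
    using f(1) g(1) by (rule bij_betw_map_prod)
  then show ?thesis unfolding poset_iso_def pairP_def using f(2) g(2)
    by (intro exI[of _ "map_prod f g"]) auto
qed



lemma fn: "is_forest I t \<Longrightarrow> (a,b) \<in> t \<Longrightarrow> (a,b') \<in> t \<Longrightarrow> b = b'"
  unfolding is_forest_def by blast

lemma irr: "is_forest I t \<Longrightarrow> (a,a) \<notin> t\<^sup>+"
  unfolding is_forest_def acyclic_def by blast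

lemma antis: assumes "is_forest I t" "(a,b) \<in> t\<^sup>*" "(b,a) \<in> t\<^sup>*" shows "a = b"
proof (rule ccontr)
  assume "a \<noteq> b"
  then have "(a,b) \<in> t\<^sup>+" "(b,a) \<in> t\<^sup>+" using assms by (auto simp: rtrancl_eq_or_trancl)
  then have "(a,a) \<in> t\<^sup>+" by auto
  then show False using irr[OF assms(1)] by blast
qed

lemma roots_eq: "is_forest I t \<Longrightarrow> roots I t = I - Domain t"
  unfolding roots_def by auto

lemma tree_root: assumes "is_rooted_tree I t" obtains r where "roots I t = {r}"
  using assms unfolding is_rooted_tree_def by (meson card_1_singletonE)

lemma dom_sub: "is_forest I t \<Longrightarrow> Domain t \<subseteq> I"
  unfolding is_forest_def by auto

definition Pv :: "forest \<Rightarrow> nat \<Rightarrow> forest" where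
  "Pv t v = {(c,p) \<in> t. (c,v) \<in> t\<^sup>*}"

lemma Pv_Dn: "Pv t v \<in> Dn t"
  unfolding Dn_def Pv_def by (auto intro: converse_rtrancl_into_rtrancl)

lemma reach: assumes "y \<in> Dn t" "(c,w) \<in> t\<^sup>*" "(w,g) \<in> y" shows "\<exists>q. (c,q) \<in> y"
  using assms(2,3)
proof (induction rule: converse_rtrancl_induct)
  case base then show ?case by blast
next
  case (step c c1)
  then show ?case using assms(1) unfolding Dn_def by blast
qed

lemma reach2: assumes "is_forest I t" "y \<in> Dn t" "(c,w) \<in> t\<^sup>*" "(w,g) \<in> y" "(c,p) \<in> t"
  shows "(c,p) \<in> y"
proof -
  obtain q where "(c,q) \<in> y" using reach[OF assms(2-4)] by blast
  moreover have "y \<subseteq> t" using assms(2) unfolding Dn_def by auto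
  ultimately show ?thesis using fn[OF assms(1)] assms(5) by blast
qed

lemma Pv_sub: assumes "is_forest I t" "y \<in> Dn t" "(v,g) \<in> y" shows "Pv t v \<subseteq> y"
  using reach2[OF assms(1,2) _ assms(3)] unfolding Pv_def by blast

lemma Pv_mono: assumes "is_forest I t" "v \<in> Domain t" "w \<in> Domain t"
  shows "Pv t v \<subseteq> Pv t w \<longleftrightarrow> (v,w) \<in> t\<^sup>*"
proof
  obtain g where g: "(v,g) \<in> t" using assms(2) by blast
  assume "Pv t v \<subseteq> Pv t w"
  moreover have "(v,g) \<in> Pv t v" using g unfolding Pv_def by auto
  ultimately show "(v,w) \<in> t\<^sup>*" unfolding Pv_def by auto
next
  assume "(v,w) \<in> t\<^sup>*" then show "Pv t v \<subseteq> Pv t w" unfolding Pv_def by auto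
qed

lemma Pv_inj: assumes "is_forest I t" "v \<in> Domain t" "w \<in> Domain t" "Pv t v = Pv t w"
  shows "v = w"
  using Pv_mono[OF assms(1-3)] Pv_mono[OF assms(1,3,2)] antis[OF assms(1)] assms(4) by auto

definition JIp :: "'a set \<Rightarrow> ('a \<Rightarrow> 'a \<Rightarrow> bool) \<Rightarrow> 'a \<Rightarrow> bool" where
  "JIp C le x \<longleftrightarrow> x \<in> C \<and> (\<exists>m\<in>C. le m x \<and> m \<noteq> x \<and> (\<forall>y\<in>C. le y x \<and> y \<noteq> x \<longrightarrow> le y m))"

lemma JI_Dn: assumes F: "is_forest I t"
  shows "JIp (Dn t) (\<subseteq>) x \<longleftrightarrow> (\<exists>v\<in>Domain t. x = Pv t v)"
proof
  assume "JIp (Dn t) (\<subseteq>) x"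
  then have x: "x \<in> Dn t" and "\<exists>m\<in>Dn t. m \<subseteq> x \<and> m \<noteq> x \<and> (\<forall>y\<in>Dn t. y \<subseteq> x \<and> y \<noteq> x \<longrightarrow> y \<subseteq> m)"
    unfolding JIp_def by simp_all
  then obtain m where m: "m \<in> Dn t" "m \<subseteq> x" "m \<noteq> x"
    and mx0: "\<forall>y\<in>Dn t. y \<subseteq> x \<and> y \<noteq> x \<longrightarrow> y \<subseteq> m" by blast
  have mx: "\<And>y. y \<in> Dn t \<Longrightarrow> y \<subseteq> x \<Longrightarrow> y \<noteq> x \<Longrightarrow> y \<subseteq> m" using mx0 by simp
  obtain e where e: "e \<in> x" "e \<notin> m" using m by blast
  obtain c p where cp: "(c,p) \<in> x" "(c,p) \<notin> m" using e by (cases e) simp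
  have xt: "x \<subseteq> t" using x unfolding Dn_def by auto
  have sub: "Pv t c \<subseteq> x" using Pv_sub[OF F x cp(1)] .
  have cpP: "(c,p) \<in> Pv t c" using cp xt unfolding Pv_def by blast
  have "Pv t c = x"
  proof (rule ccontr)
    assume "Pv t c \<noteq> x"
    then have "Pv t c \<subseteq> m" using mx[OF Pv_Dn sub] by simp
    then show False using cpP cp(2) by blast
  qed
  moreover have "c \<in> Domain t" using cp xt by auto
  ultimately show "\<exists>v\<in>Domain t. x = Pv t v" by blast
next
  assume "\<exists>v\<in>Domain t. x = Pv t v"
  then obtain v g where x: "x = Pv t v" and vg: "(v,g) \<in> t" by blast
  define m where "m = {(c,p) \<in> t. (c,v) \<in> t\<^sup>+}"
  have mD: "m \<in> Dn t" unfolding Dn_def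
  proof (intro CollectI conjI allI impI)
    show "m \<subseteq> t" unfolding m_def by auto
    fix c p g' assume "(c,p) \<in> t" "(p,g') \<in> m"
    then show "(c,p) \<in> m" unfolding m_def using trancl_into_trancl2[of c p t v] by auto
  qed
  have "m \<subseteq> x" unfolding m_def x Pv_def by auto
  moreover have "(v,g) \<in> x" using vg unfolding x Pv_def by blast
  moreover have "(v,g) \<notin> m" using irr[OF F, of v] unfolding m_def by blast
  moreover have "\<forall>y\<in>Dn t. y \<subseteq> x \<and> y \<noteq> x \<longrightarrow> y \<subseteq> m"
  proof (intro ballI impI subsetI)
    fix y e assume y: "y \<in> Dn t" "y \<subseteq> x \<and> y \<noteq> x" and e: "e \<in> y"
    obtain c p where e': "e = (c,p)" by (cases e)
    have "(c,p) \<in> Pv t v" using y e e' x by blast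
    then have "(c,p) \<in> t" "(c,v) \<in> t\<^sup>*" unfolding Pv_def by auto
    moreover have "c \<noteq> v"
    proof
      assume "c = v"
      then have "Pv t v \<subseteq> y" using Pv_sub[OF F y(1), of v p] e e' by blast
      then show False using y x by blast
    qed
    ultimately show "e \<in> m" unfolding m_def e' using rtrancl_eq_or_trancl[of c v t] by blast
  qed
  ultimately show "JIp (Dn t) (\<subseteq>) x" unfolding JIp_def using mD Pv_Dn[of t v]
    by (intro conjI bexI[of _ m]) (auto simp: x)
qed



lemma JI_transfer:
  assumes b: "bij_betw F C C'" and o: "\<forall>x\<in>C. \<forall>y\<in>C. le x y \<longleftrightarrow> le' (F x) (F y)"
    and x: "x \<in> C"
  shows "JIp C le x \<longleftrightarrow> JIp C' le' (F x)"
proof -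
  have inj: "\<And>a b. a \<in> C \<Longrightarrow> b \<in> C \<Longrightarrow> F a = F b \<longleftrightarrow> a = b"
    using b unfolding bij_betw_def inj_on_def by blast
  have img: "\<And>a. a \<in> C \<Longrightarrow> F a \<in> C'" using b unfolding bij_betw_def by blast
  have surj: "\<And>a'. a' \<in> C' \<Longrightarrow> \<exists>a\<in>C. a' = F a" using b unfolding bij_betw_def by blast
  have oo: "\<And>a b. a \<in> C \<Longrightarrow> b \<in> C \<Longrightarrow> le a b \<longleftrightarrow> le' (F a) (F b)" using o by blast
  show ?thesis
  proof
    assume "JIp C le x"
    then obtain m where m: "m \<in> C" "le m x" "m \<noteq> x" and mm: "\<forall>y\<in>C. le y x \<and> y \<noteq> x \<longrightarrow> le y m"
      unfolding JIp_def by blast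
    have "\<forall>y'\<in>C'. le' y' (F x) \<and> y' \<noteq> F x \<longrightarrow> le' y' (F m)"
    proof (intro ballI impI)
      fix y' assume y': "y' \<in> C'" "le' y' (F x) \<and> y' \<noteq> F x"
      then obtain y where y: "y \<in> C" "y' = F y" using surj by blast
      then have "le y x" "y \<noteq> x" using y' oo[OF y(1) x] by auto
      then have "le y m" using mm y(1) by blast
      then show "le' y' (F m)" using oo[OF y(1) m(1)] y(2) by simp
    qed
    moreover have "le' (F m) (F x)" "F m \<noteq> F x" using m oo[OF m(1) x] inj[OF m(1) x] by auto
    ultimately show "JIp C' le' (F x)" unfolding JIp_def using img[OF m(1)] img[OF x] by blast
  next
    assume "JIp C' le' (F x)"
    then obtain m' where m': "m' \<in> C'" "le' m' (F x)" "m' \<noteq> F x"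
      and mm: "\<forall>y'\<in>C'. le' y' (F x) \<and> y' \<noteq> F x \<longrightarrow> le' y' m'"
      unfolding JIp_def by blast
    then obtain m where m: "m \<in> C" "m' = F m" using surj by blast
    have "\<forall>y\<in>C. le y x \<and> y \<noteq> x \<longrightarrow> le y m"
    proof (intro ballI impI)
      fix y assume y: "y \<in> C" "le y x \<and> y \<noteq> x"
      then have "le' (F y) (F x)" "F y \<noteq> F x" using oo[OF y(1) x] inj[OF y(1) x] by auto
      then have "le' (F y) m'" using mm img[OF y(1)] by blast
      then show "le y m" using oo[OF y(1) m(1)] m(2) by simp
    qed
    moreover have "le m x" "m \<noteq> x" using m m' oo[OF m(1) x] by auto
    ultimately show "JIp C le x" unfolding JIp_def using m(1) x by blast
  qed
qed



lemma card_functional: assumes "is_forest I t" shows "card t = card (Domain t)"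
proof -
  have "inj_on fst t" using fn[OF assms] unfolding inj_on_def by auto
  then have "card (fst ` t) = card t" by (rule card_image)
  moreover have "fst ` t = Domain t" by force
  ultimately show ?thesis by simp
qed

lemma tree_facts: assumes "is_rooted_tree I t" "roots I t = {r}"
  shows "is_forest I t" "I = insert r (Domain t)" "r \<notin> Domain t" "Domain t \<subseteq> I"
    "card (Domain t) = card I - 1" "finite I"
proof -
  show F: "is_forest I t" using assms unfolding is_rooted_tree_def by auto
  have e: "I - Domain t = {r}" using roots_eq[OF F] assms(2) by simp
  show d: "Domain t \<subseteq> I" using dom_sub[OF F] .
  show "I = insert r (Domain t)" using e d by blast
  show "r \<notin> Domain t" using e by blast
  show fI: "finite I" using F unfolding is_forest_def by auto
  have rI: "r \<in> I" using e by blast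
  have "Domain t = I - {r}" using e d by blast
  then show "card (Domain t) = card I - 1" using rI fI by (simp add: card_Diff_singleton_if)
qed

lemma reconstruct:
  assumes T: "is_rooted_tree I t" and S: "is_rooted_tree J s"
    and b: "bij_betw F (Dn t) (Dn s)" and o: "\<forall>x\<in>Dn t. \<forall>y\<in>Dn t. x \<subseteq> y \<longleftrightarrow> F x \<subseteq> F y"
  shows "tree_iso I t J s"
proof -
  obtain rt where rt: "roots I t = {rt}" using tree_root[OF T] by blast
  obtain rs where rs: "roots J s = {rs}" using tree_root[OF S] by blast
  note tf = tree_facts[OF T rt] and sf = tree_facts[OF S rs]
  have Ft: "is_forest I t" and Fs: "is_forest J s" using tf sf by auto
  have injF: "\<And>a c. a \<in> Dn t \<Longrightarrow> c \<in> Dn t \<Longrightarrow> F a = F c \<longleftrightarrow> a = c"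
    using b unfolding bij_betw_def inj_on_def by blast
  have imgF: "\<And>a. a \<in> Dn t \<Longrightarrow> F a \<in> Dn s" using b unfolding bij_betw_def by blast
  have surjF: "\<And>a'. a' \<in> Dn s \<Longrightarrow> \<exists>a\<in>Dn t. a' = F a" using b unfolding bij_betw_def by blast
  have JI: "\<And>x. x \<in> Dn t \<Longrightarrow> JIp (Dn t) (\<subseteq>) x \<longleftrightarrow> JIp (Dn s) (\<subseteq>) (F x)"
    using JI_transfer[OF b o] by blast
  have ex: "\<exists>w\<in>Domain s. F (Pv t v) = Pv s w" if v: "v \<in> Domain t" for v
  proof -
    have "JIp (Dn t) (\<subseteq>) (Pv t v)" using JI_Dn[OF Ft] v by blast
    then have "JIp (Dn s) (\<subseteq>) (F (Pv t v))" using JI[OF Pv_Dn] by blast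
    then show ?thesis using JI_Dn[OF Fs] by blast
  qed
  define h where "h v = (SOME w. w \<in> Domain s \<and> F (Pv t v) = Pv s w)" for v
  have hP: "h v \<in> Domain s \<and> F (Pv t v) = Pv s (h v)" if "v \<in> Domain t" for v
    unfolding h_def using someI_ex[OF ex[OF that, unfolded Bex_def]] .
  have h_inj: "v = w" if "v \<in> Domain t" "w \<in> Domain t" "h v = h w" for v w
  proof -
    have "F (Pv t v) = F (Pv t w)" using hP that by metis
    then have "Pv t v = Pv t w" using injF[OF Pv_Dn Pv_Dn] by blast
    then show ?thesis using Pv_inj[OF Ft that(1,2)] by blast
  qed
  have h_surj: "\<exists>v\<in>Domain t. h v = w" if w: "w \<in> Domain s" for w
  proof -
    obtain x where x: "x \<in> Dn t" "Pv s w = F x" using surjF[OF Pv_Dn] by blast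
    have "JIp (Dn s) (\<subseteq>) (F x)" using JI_Dn[OF Fs] w x by blast
    then have "JIp (Dn t) (\<subseteq>) x" using JI[OF x(1)] by blast
    then obtain v where v: "v \<in> Domain t" "x = Pv t v" using JI_Dn[OF Ft] by blast
    then have "Pv s w = Pv s (h v)" using hP x by metis
    then have "w = h v" using Pv_inj[OF Fs w] hP[OF v(1)] by blast
    then show ?thesis using v by blast
  qed
  have h_star: "(v,w) \<in> t\<^sup>* \<longleftrightarrow> (h v, h w) \<in> s\<^sup>*" if "v \<in> Domain t" "w \<in> Domain t" for v w
  proof -
    have "(v,w) \<in> t\<^sup>* \<longleftrightarrow> Pv t v \<subseteq> Pv t w" using Pv_mono[OF Ft that] by simp
    also have "\<dots> \<longleftrightarrow> F (Pv t v) \<subseteq> F (Pv t w)" using o Pv_Dn by blast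
    also have "\<dots> \<longleftrightarrow> Pv s (h v) \<subseteq> Pv s (h w)" using hP that by metis
    also have "\<dots> \<longleftrightarrow> (h v, h w) \<in> s\<^sup>*" using Pv_mono[OF Fs] hP that by blast
    finally show ?thesis .
  qed
  define f where "f v = (if v \<in> Domain t then h v else rs)" for v
  have edge: "(f c, f p) \<in> s" if cp: "(c,p) \<in> t" for c p
  proof -
    have cD: "c \<in> Domain t" using cp by blast
    obtain q where q: "(h c, q) \<in> s" using hP[OF cD] by blast
    have cnp: "c \<noteq> p" using irr[OF Ft, of c] cp by blast
    have qTrue: "(q, f p) \<in> s\<^sup>*" if pD: "p \<in> Domain t" "q \<noteq> f p"
    proof -
        have "f p = h p" using pD unfolding f_def by simp
        moreover have "(h c, h p) \<in> s\<^sup>*" using h_star[OF cD pD(1)] cp by blast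
        moreover have "h c \<noteq> h p" using h_inj[OF cD pD(1)] cnp by blast
        ultimately have "(h c, f p) \<in> s\<^sup>+" by (simp add: rtrancl_eq_or_trancl)
        then obtain z where "(h c, z) \<in> s" "(z, f p) \<in> s\<^sup>*" using tranclD by metis
        then show "(q, f p) \<in> s\<^sup>*" using fn[OF Fs q] by blast
    qed
    have key: "q = f p"
    proof (rule ccontr)
      assume qne: "q \<noteq> f p"
      have qD: "q \<in> Domain s"
      proof (cases "p \<in> Domain t")
        case False
        then have "f p = rs" unfolding f_def by simp
        moreover have "q \<in> J" using q Fs unfolding is_forest_def by auto
        ultimately show ?thesis using qne sf(2) by blast
      next
        case True
        have "(q, f p) \<in> s\<^sup>*" using qTrue[OF True qne] .
        then show ?thesis using qne by (auto simp: rtrancl_eq_or_trancl dest: tranclD)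
      qed
      obtain w where w: "w \<in> Domain t" "h w = q" using h_surj[OF qD] by blast
      have "(h c, h w) \<in> s\<^sup>*" using q w by auto
      then have cw: "(c,w) \<in> t\<^sup>*" using h_star[OF cD w(1)] by blast
      have "c \<noteq> w" using w q irr[OF Fs, of "h c"] by auto
      then have "(c,w) \<in> t\<^sup>+" using cw by (simp add: rtrancl_eq_or_trancl)
      then obtain z where "(c,z) \<in> t" "(z,w) \<in> t\<^sup>*" using tranclD by metis
      then have pw: "(p,w) \<in> t\<^sup>*" using fn[OF Ft cp] by blast
      show False
      proof (cases "p \<in> Domain t")
        case False
        then have "p = w" using pw by (auto simp: rtrancl_eq_or_trancl dest: tranclD)
        then show False using False w by blast
      next
        case True
        have "(h w, h p) \<in> s\<^sup>*" using qTrue[OF True qne] w True unfolding f_def by simp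
        then have "(w, p) \<in> t\<^sup>*" using h_star[OF w(1) True] by blast
        then have "w = p" using antis[OF Ft _ pw] by blast
        then show False using qne w True unfolding f_def by simp
      qed
    qed
    then show ?thesis using q cD unfolding f_def by simp
  qed
  have injf: "inj_on f I"
  proof (rule inj_onI)
    fix a c assume ac: "a \<in> I" "c \<in> I" "f a = f c"
    show "a = c"
    proof (cases "a \<in> Domain t"; cases "c \<in> Domain t")
      assume "a \<in> Domain t" "c \<in> Domain t" then show ?thesis using ac h_inj unfolding f_def by simp
    next
      assume "a \<in> Domain t" "c \<notin> Domain t" then show ?thesis using ac hP sf(3) unfolding f_def by auto
    next
      assume "a \<notin> Domain t" "c \<in> Domain t" then show ?thesis using ac hP sf(3) unfolding f_def by auto
    next
      assume "a \<notin> Domain t" "c \<notin> Domain t" then show ?thesis using ac tf(2) by blast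
    qed
  qed
  have imgf: "f ` I = J"
  proof
    show "f ` I \<subseteq> J" using hP sf(2) unfolding f_def by auto
    show "J \<subseteq> f ` I"
    proof
      fix w assume "w \<in> J"
      then have "w = rs \<or> w \<in> Domain s" using sf(2) by blast
      then show "w \<in> f ` I"
      proof
        assume "w = rs" then have "w = f rt" using tf(3) unfolding f_def by simp
        then show ?thesis using tf(2) by blast
      next
        assume "w \<in> Domain s" then obtain v where "v \<in> Domain t" "h v = w" using h_surj by blast
        then show ?thesis using tf(2) unfolding f_def by force
      qed
    qed
  qed
  have bf: "bij_betw f I J" using injf imgf unfolding bij_betw_def by blast
  have sub: "map_prod f f ` t \<subseteq> s" using edge by auto
  have tI: "t \<subseteq> I \<times> I" using Ft unfolding is_forest_def by auto
  have "inj_on (map_prod f f) t"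
    using map_prod_inj_on[OF injf injf] inj_on_subset tI by blast
  then have "card (map_prod f f ` t) = card t" by (rule card_image)
  also have "\<dots> = card s"
    using card_functional[OF Ft] card_functional[OF Fs] tf(5) sf(5) bij_betw_same_card[OF bf] by simp
  finally have "map_prod f f ` t = s" using sub forest_finite[OF Fs] by (simp add: card_subset_eq)
  then show ?thesis unfolding tree_iso_def using bf by blast
qed



lemma interval_iso_iff:
  assumes Ft: "is_forest I t" and Fs: "is_forest J s"
  shows "poset_iso (nap_interval I t) (nap_interval J s) \<longleftrightarrow>
    (\<exists>F. bij_betw F (Dn t) (Dn s) \<and> (\<forall>x\<in>Dn t. \<forall>y\<in>Dn t. x \<subseteq> y \<longleftrightarrow> F x \<subseteq> F y))"
proof -
  have "nap_interval I t = (Dn t, nap_le I)" "nap_interval J s = (Dn s, nap_le J)"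
    unfolding nap_interval_def using interval_carrier[OF Ft] interval_carrier[OF Fs] by auto
  moreover have "\<And>F. bij_betw F (Dn t) (Dn s) \<Longrightarrow>
     (\<forall>x\<in>Dn t. \<forall>y\<in>Dn t. nap_le I x y \<longleftrightarrow> nap_le J (F x) (F y)) \<longleftrightarrow>
     (\<forall>x\<in>Dn t. \<forall>y\<in>Dn t. x \<subseteq> y \<longleftrightarrow> F x \<subseteq> F y)"
  proof -
    fix F assume b: "bij_betw F (Dn t) (Dn s)"
    then have "\<And>x. x \<in> Dn t \<Longrightarrow> F x \<in> Dn s" unfolding bij_betw_def by blast
    then show "(\<forall>x\<in>Dn t. \<forall>y\<in>Dn t. nap_le I x y \<longleftrightarrow> nap_le J (F x) (F y)) \<longleftrightarrow>
     (\<forall>x\<in>Dn t. \<forall>y\<in>Dn t. x \<subseteq> y \<longleftrightarrow> F x \<subseteq> F y)"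
      using nap_le_Dn[OF Ft] nap_le_Dn[OF Fs] by simp
  qed
  ultimately show ?thesis unfolding poset_iso_def by (metis fst_conv snd_conv)
qed

lemma Dn_map:
  assumes "x \<in> Dn t" "t \<subseteq> I \<times> I" "inj_on f I"
  shows "map_prod f f ` x \<in> Dn (map_prod f f ` t)"
  unfolding Dn_def
proof (intro CollectI conjI allI impI)
  show "map_prod f f ` x \<subseteq> map_prod f f ` t" using assms(1) unfolding Dn_def by auto
  fix c p g assume h: "(c,p) \<in> map_prod f f ` t" "(p,g) \<in> map_prod f f ` x"
  then obtain c0 p0 where a: "(c0,p0) \<in> t" "c = f c0" "p = f p0" by auto
  obtain p1 g1 where b: "(p1,g1) \<in> x" "p = f p1" "g = f g1" using h by auto
  have "x \<subseteq> t" using assms(1) unfolding Dn_def by auto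
  then have "p1 \<in> I" "p0 \<in> I" using a b assms(2) by auto
  then have "p1 = p0" using a b assms(3) unfolding inj_on_def by metis
  then have "(c0,p0) \<in> x" using a b assms(1) unfolding Dn_def by blast
  then show "(c,p) \<in> map_prod f f ` x" using a by auto
qed

lemma map_back: assumes "x \<subseteq> I \<times> I" "\<forall>u\<in>I. g (f u) = u"
  shows "map_prod g g ` map_prod f f ` x = x"
proof -
  have "map_prod g g ` map_prod f f ` x = (map_prod g g \<circ> map_prod f f) ` x" by (simp add: image_comp)
  also have "\<dots> = id ` x"
    by (rule image_cong) (use assms in auto)
  finally show ?thesis by simp
qed

lemma relabel:
  assumes b: "bij_betw f I J" and T: "is_rooted_tree I t" and s: "s = map_prod f f ` t"
  shows "is_rooted_tree J s" "poset_iso (nap_interval I t) (nap_interval J s)" "roots J s = f ` roots I t"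
proof -
  have Ft: "is_forest I t" using T unfolding is_rooted_tree_def by auto
  have tI: "t \<subseteq> I \<times> I" using Ft unfolding is_forest_def by auto
  have injf: "inj_on f I" and imf: "f ` I = J" using b unfolding bij_betw_def by auto
  define g where "g = inv_into I f"
  have gf: "\<And>u. u \<in> I \<Longrightarrow> g (f u) = u" unfolding g_def using injf by simp
  have fg: "\<And>w. w \<in> J \<Longrightarrow> f (g w) = w" unfolding g_def using imf by (auto simp: f_inv_into_f)
  have gJ: "\<And>w. w \<in> J \<Longrightarrow> g w \<in> I" unfolding g_def using imf by (auto simp: inv_into_into)
  have bg: "bij_betw g J I" unfolding g_def using b by (rule bij_betw_inv_into)
  have injg: "inj_on g J" using bg unfolding bij_betw_def by auto
  have sJ: "s \<subseteq> J \<times> J" using tI imf s by auto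
  have gf': "\<forall>u\<in>I. g (f u) = u" using gf by blast
  have fg': "\<forall>u\<in>J. f (g u) = u" using fg by blast
  have mbt: "\<And>x. x \<subseteq> I \<times> I \<Longrightarrow> map_prod g g ` map_prod f f ` x = x" using map_back gf' by blast
  have mbs: "\<And>x. x \<subseteq> J \<times> J \<Longrightarrow> map_prod f f ` map_prod g g ` x = x" using map_back fg' by blast
  have ts: "t = map_prod g g ` s" using mbt[OF tI] s by simp
  have tr: "\<exists>a' b'. a = f a' \<and> b = f b' \<and> (a',b') \<in> t\<^sup>+" if "(a,b) \<in> s\<^sup>+" for a b
    using that
  proof (induction rule: trancl_induct)
    case (base y) then show ?case using s by auto
  next
    case (step y z)
    then obtain a' b' where ab: "a = f a'" "y = f b'" "(a',b') \<in> t\<^sup>+" by blast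
    obtain y0 z0 where yz: "(y0,z0) \<in> t" "y = f y0" "z = f z0" using step s by auto
    have "b' \<in> I" using ab(3) tI by (metis SigmaD2 subsetD trancl_subset_Sigma)
    moreover have "y0 \<in> I" using yz tI by auto
    ultimately have "b' = y0" using injf ab yz unfolding inj_on_def by metis
    then have "(a', z0) \<in> t\<^sup>+" using ab yz by (meson trancl.trancl_into_trancl)
    then show ?case using ab yz by blast
  qed
  have Fs: "is_forest J s"
    unfolding is_forest_def
  proof (intro conjI allI impI)
    show "finite J" using imf Ft unfolding is_forest_def by auto
    show "s \<subseteq> J \<times> J" by (rule sJ)
    fix c p q assume "(c,p) \<in> s" "(c,q) \<in> s"
    then obtain c1 p1 c2 q2 where "(c1,p1) \<in> t" "(c2,q2) \<in> t" "c = f c1" "p = f p1" "c = f c2" "q = f q2"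
      using s by auto
    moreover then have "c1 = c2" using injf tI unfolding inj_on_def by auto
    ultimately show "p = q" using fn[OF Ft] by metis
  next
    show "acyclic s" unfolding acyclic_def
    proof (intro allI notI)
      fix a assume "(a,a) \<in> s\<^sup>+"
      then obtain a' b' where ab: "a = f a'" "a = f b'" "(a',b') \<in> t\<^sup>+" using tr by blast
      have "a' \<in> I" "b' \<in> I" using ab(3) tI by (metis SigmaD1 SigmaD2 subsetD trancl_subset_Sigma)+
      then have "a' = b'" using ab injf unfolding inj_on_def by metis
      then show False using ab irr[OF Ft] by blast
    qed
  qed
  have roots_img: "roots J s = f ` roots I t"
  proof
    show "roots J s \<subseteq> f ` roots I t"
    proof
      fix w assume w: "w \<in> roots J s"
      then have wJ: "w \<in> J" unfolding roots_def by auto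
      have "g w \<in> roots I t"
      proof -
        have "\<not> (\<exists>p. (g w, p) \<in> t)"
        proof
          assume "\<exists>p. (g w, p) \<in> t"
          then obtain p where "(g w, p) \<in> t" by blast
          then have "(f (g w), f p) \<in> s" using s by force
          then show False using w fg[OF wJ] unfolding roots_def by auto
        qed
        then show ?thesis unfolding roots_def using gJ[OF wJ] by auto
      qed
      then show "w \<in> f ` roots I t" using fg[OF wJ] by force
    qed
    show "f ` roots I t \<subseteq> roots J s"
    proof
      fix w assume "w \<in> f ` roots I t"
      then obtain u where u: "u \<in> I" "\<not> (\<exists>p. (u,p) \<in> t)" "w = f u" unfolding roots_def by auto
      have "\<not> (\<exists>p. (w,p) \<in> s)"
      proof
        assume "\<exists>p. (w,p) \<in> s"
        then obtain c p where "(c,p) \<in> t" "w = f c" using s by auto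
        moreover then have "c = u" using u injf tI unfolding inj_on_def by auto
        ultimately show False using u by blast
      qed
      then show "w \<in> roots J s" unfolding roots_def using u imf by auto
    qed
  qed
  then show "roots J s = f ` roots I t" .
  have "card (roots J s) = card (roots I t)"
    using roots_img card_image inj_on_subset[OF injf] unfolding roots_def by (metis (no_types, lifting) mem_Collect_eq subsetI)
  then show "is_rooted_tree J s" using T Fs unfolding is_rooted_tree_def by simp
  have bD: "bij_betw (\<lambda>x. map_prod f f ` x) (Dn t) (Dn s)"
  proof (rule bij_betw_byWitness[of _ "\<lambda>y. map_prod g g ` y"])
    show "\<forall>a\<in>Dn t. map_prod g g ` map_prod f f ` a = a"
    proof
      fix a assume "a \<in> Dn t" then have "a \<subseteq> I \<times> I" using tI unfolding Dn_def by auto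
      then show "map_prod g g ` map_prod f f ` a = a" by (rule mbt)
    qed
    show "\<forall>a'\<in>Dn s. map_prod f f ` map_prod g g ` a' = a'"
    proof
      fix a assume "a \<in> Dn s" then have "a \<subseteq> J \<times> J" using sJ unfolding Dn_def by auto
      then show "map_prod f f ` map_prod g g ` a = a" by (rule mbs)
    qed
    show "(\<lambda>x. map_prod f f ` x) ` Dn t \<subseteq> Dn s" using Dn_map[OF _ tI injf] s by auto
    show "(\<lambda>y. map_prod g g ` y) ` Dn s \<subseteq> Dn t" using Dn_map[OF _ sJ injg] ts by auto
  qed
  have "\<forall>x\<in>Dn t. \<forall>y\<in>Dn t. x \<subseteq> y \<longleftrightarrow> map_prod f f ` x \<subseteq> map_prod f f ` y"
  proof (intro ballI iffI)
    fix x y assume "x \<in> Dn t" "y \<in> Dn t" and xy: "map_prod f f ` x \<subseteq> map_prod f f ` y"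
    have "map_prod g g ` map_prod f f ` x \<subseteq> map_prod g g ` map_prod f f ` y" using xy by (rule image_mono)
    moreover have "x \<subseteq> I \<times> I" "y \<subseteq> I \<times> I" using tI \<open>x \<in> Dn t\<close> \<open>y \<in> Dn t\<close> unfolding Dn_def by auto
    ultimately show "x \<subseteq> y" using mbt by simp
  qed auto
  then show "poset_iso (nap_interval I t) (nap_interval J s)"
    using interval_iso_iff[OF Ft Fs] bD by blast
qed

lemma Fbasis_inj: "(Fbasis c :: forest list poset set \<Rightarrow> 'k::field) = Fbasis d \<longleftrightarrow> c = d"
proof
  assume "(Fbasis c :: forest list poset set \<Rightarrow> 'k::field) = Fbasis d"
  then have "(Fbasis c :: forest list poset set \<Rightarrow> 'k::field) c = Fbasis d c" by simp
  then show "c = d" unfolding Fbasis_def by (auto split: if_splits)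
qed simp

lemma part1:
  assumes T: "is_rooted_tree I t" and S: "is_rooted_tree J s"
  shows "(Ftree I t :: forest list poset set \<Rightarrow> 'k::field) = Ftree J s \<longleftrightarrow> tree_iso I t J s"
proof -
  have Ft: "is_forest I t" and Fs: "is_forest J s" using T S unfolding is_rooted_tree_def by auto
  have "(Ftree I t :: forest list poset set \<Rightarrow> 'k::field) = Ftree J s \<longleftrightarrow>
      poset_iso (prod_posets [nap_interval I t]) (prod_posets [nap_interval J s])"
    unfolding Ftree_def Fbasis_inj iso_class_eq ..
  also have "\<dots> \<longleftrightarrow> poset_iso (nap_interval I t) (nap_interval J s)"
  proof
    assume "poset_iso (prod_posets [nap_interval I t]) (prod_posets [nap_interval J s])"
    then show "poset_iso (nap_interval I t) (nap_interval J s)"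
      by (meson iso_sym iso_trans prod_single)
  next
    assume "poset_iso (nap_interval I t) (nap_interval J s)"
    then show "poset_iso (prod_posets [nap_interval I t]) (prod_posets [nap_interval J s])"
      by (meson iso_sym iso_trans prod_single)
  qed
  also have "\<dots> \<longleftrightarrow> tree_iso I t J s"
  proof
    assume "poset_iso (nap_interval I t) (nap_interval J s)"
    then obtain F where "bij_betw F (Dn t) (Dn s)" "\<forall>x\<in>Dn t. \<forall>y\<in>Dn t. x \<subseteq> y \<longleftrightarrow> F x \<subseteq> F y"
      using interval_iso_iff[OF Ft Fs] by blast
    then show "tree_iso I t J s" using reconstruct[OF T S] by blast
  next
    assume "tree_iso I t J s"
    then show "poset_iso (nap_interval I t) (nap_interval J s)"
      unfolding tree_iso_def using relabel(2)[OF _ T] by blast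
  qed
  finally show ?thesis .
qed



lemma merge:
  assumes T1: "is_rooted_tree I1 t1" and T2: "is_rooted_tree I2 t2"
    and r1: "roots I1 t1 = {r}" and r2: "roots I2 t2 = {r}" and int: "I1 \<inter> I2 = {r}"
  shows "is_rooted_tree (I1 \<union> I2) (t1 \<union> t2)"
    "poset_iso (pairP (nap_interval I1 t1) (nap_interval I2 t2)) (nap_interval (I1 \<union> I2) (t1 \<union> t2))"
proof -
  note f1 = tree_facts[OF T1 r1] and f2 = tree_facts[OF T2 r2]
  have F1: "is_forest I1 t1" and F2: "is_forest I2 t2" using f1 f2 by auto
  have t1I: "t1 \<subseteq> I1 \<times> I1" and t2I: "t2 \<subseteq> I2 \<times> I2" using F1 F2 unfolding is_forest_def by auto
  have d1: "v \<notin> I2" if "v \<in> Domain t1" for v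
  proof
    assume "v \<in> I2" then have "v \<in> I1 \<inter> I2" using that f1(4) by blast
    then have "v = r" using int by blast
    then show False using that f1(3) by simp
  qed
  have d2: "v \<notin> I1" if "v \<in> Domain t2" for v
  proof
    assume "v \<in> I1" then have "v \<in> I1 \<inter> I2" using that f2(4) by blast
    then have "v = r" using int by blast
    then show False using that f2(3) by simp
  qed
  let ?t = "t1 \<union> t2" and ?I = "I1 \<union> I2"
  have tr: "(a,b) \<in> t1\<^sup>+ \<or> (a,b) \<in> t2\<^sup>+" if "(a,b) \<in> ?t\<^sup>+" for a b
    using that
  proof (induction rule: trancl_induct)
    case (base y) then show ?case by auto
  next
    case (step y z)
    have R1: "y \<in> I1" if "(a,y) \<in> t1\<^sup>+" using that t1I by (metis SigmaD2 subsetD trancl_subset_Sigma)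
    have R2: "y \<in> I2" if "(a,y) \<in> t2\<^sup>+" using that t2I by (metis SigmaD2 subsetD trancl_subset_Sigma)
    from step.IH show ?case
    proof
      assume h: "(a,y) \<in> t1\<^sup>+"
      have "(y,z) \<notin> t2" using d2 R1[OF h] by blast
      then have "(y,z) \<in> t1" using step.hyps by blast
      then show ?case using h by (meson trancl.trancl_into_trancl)
    next
      assume h: "(a,y) \<in> t2\<^sup>+"
      have "(y,z) \<notin> t1" using d1 R2[OF h] by blast
      then have "(y,z) \<in> t2" using step.hyps by blast
      then show ?case using h by (meson trancl.trancl_into_trancl)
    qed
  qed
  have Ft: "is_forest ?I ?t"
    unfolding is_forest_def
  proof (intro conjI allI impI)
    show "finite ?I" using f1 f2 by auto
    show "?t \<subseteq> ?I \<times> ?I" using t1I t2I by auto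
    fix c p q assume "(c,p) \<in> ?t" "(c,q) \<in> ?t"
    then show "p = q" using fn[OF F1] fn[OF F2] d1 d2 t1I t2I by blast
  next
    show "acyclic ?t" unfolding acyclic_def using tr irr[OF F1] irr[OF F2] by blast
  qed
  have "roots ?I ?t = {r}" unfolding roots_eq[OF Ft] using f1 f2 int by auto
  then show "is_rooted_tree ?I ?t" using Ft unfolding is_rooted_tree_def by simp
  have dis: "t1 \<inter> t2 = {}" using d1 t2I by auto
  have car: "nap_interval I1 t1 = (Dn t1, nap_le I1)" "nap_interval I2 t2 = (Dn t2, nap_le I2)"
    "nap_interval ?I ?t = (Dn ?t, nap_le ?I)"
    unfolding nap_interval_def using interval_carrier[OF F1] interval_carrier[OF F2] interval_carrier[OF Ft]
    by auto
  have up: "a \<union> b \<in> Dn ?t" if "a \<in> Dn t1" "b \<in> Dn t2" for a b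
    unfolding Dn_def
  proof (intro CollectI conjI allI impI)
    show "a \<union> b \<subseteq> ?t" using that unfolding Dn_def by auto
    fix c p g assume h: "(c,p) \<in> ?t" "(p,g) \<in> a \<union> b"
    have ab: "a \<subseteq> t1" "b \<subseteq> t2" using that unfolding Dn_def by auto
    show "(c,p) \<in> a \<union> b"
    proof (cases "(c,p) \<in> t1")
      case True
      then have "p \<in> I1" using t1I by auto
      then have "(p,g) \<notin> b" using ab d2 by blast
      then have "(p,g) \<in> a" using h by blast
      then show ?thesis using that(1) True unfolding Dn_def by blast
    next
      case False
      then have c2: "(c,p) \<in> t2" using h by blast
      then have "p \<in> I2" using t2I by auto
      then have "(p,g) \<notin> a" using ab d1 by blast
      then have "(p,g) \<in> b" using h by blast
      then show ?thesis using that(2) c2 unfolding Dn_def by blast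
    qed
  qed
  have down1: "x \<inter> t1 \<in> Dn t1" if "x \<in> Dn ?t" for x
    using that unfolding Dn_def by blast
  have down2: "x \<inter> t2 \<in> Dn t2" if "x \<in> Dn ?t" for x
    using that unfolding Dn_def by blast
  have bij: "bij_betw (\<lambda>(a,b). a \<union> b) (Dn t1 \<times> Dn t2) (Dn ?t)"
  proof (rule bij_betw_byWitness[of _ "\<lambda>x. (x \<inter> t1, x \<inter> t2)"])
    show "\<forall>a\<in>Dn t1 \<times> Dn t2. ((case a of (a, b) \<Rightarrow> a \<union> b) \<inter> t1, (case a of (a, b) \<Rightarrow> a \<union> b) \<inter> t2) = a"
      using dis unfolding Dn_def by auto
    show "\<forall>a'\<in>Dn ?t. (case (a' \<inter> t1, a' \<inter> t2) of (a, b) \<Rightarrow> a \<union> b) = a'"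
      unfolding Dn_def by auto
    show "(\<lambda>(a, b). a \<union> b) ` (Dn t1 \<times> Dn t2) \<subseteq> Dn ?t" using up by auto
    show "(\<lambda>x. (x \<inter> t1, x \<inter> t2)) ` Dn ?t \<subseteq> Dn t1 \<times> Dn t2" using down1 down2 by auto
  qed
  show "poset_iso (pairP (nap_interval I1 t1) (nap_interval I2 t2)) (nap_interval ?I ?t)"
    unfolding poset_iso_def
  proof (intro exI[of _ "\<lambda>(a,b). a \<union> b"] conjI)
    show "bij_betw (\<lambda>(a,b). a \<union> b) (fst (pairP (nap_interval I1 t1) (nap_interval I2 t2)))
        (fst (nap_interval ?I ?t))" using bij car unfolding pairP_def by simp
    show "\<forall>x\<in>fst (pairP (nap_interval I1 t1) (nap_interval I2 t2)).
       \<forall>y\<in>fst (pairP (nap_interval I1 t1) (nap_interval I2 t2)).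
          snd (pairP (nap_interval I1 t1) (nap_interval I2 t2)) x y =
          snd (nap_interval ?I ?t) (case x of (a, b) \<Rightarrow> a \<union> b) (case y of (a, b) \<Rightarrow> a \<union> b)"
    proof (intro ballI)
      fix x y assume "x \<in> fst (pairP (nap_interval I1 t1) (nap_interval I2 t2))"
        "y \<in> fst (pairP (nap_interval I1 t1) (nap_interval I2 t2))"
      then obtain a b a' b' where xy: "x = (a,b)" "y = (a',b')" "a \<in> Dn t1" "b \<in> Dn t2"
        "a' \<in> Dn t1" "b' \<in> Dn t2" using car unfolding pairP_def by auto
      have ss: "a \<subseteq> t1" "b \<subseteq> t2" "a' \<subseteq> t1" "b' \<subseteq> t2" using xy unfolding Dn_def by auto
      have "(a \<subseteq> a' \<and> b \<subseteq> b') \<longleftrightarrow> a \<union> b \<subseteq> a' \<union> b'" using ss dis by blast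
      then show "snd (pairP (nap_interval I1 t1) (nap_interval I2 t2)) x y =
          snd (nap_interval ?I ?t) (case x of (a, b) \<Rightarrow> a \<union> b) (case y of (a, b) \<Rightarrow> a \<union> b)"
        using car xy nap_le_Dn[OF F1 xy(3,5)] nap_le_Dn[OF F2 xy(4,6)] nap_le_Dn[OF Ft up[OF xy(3,4)] up[OF xy(5,6)]]
        unfolding pairP_def by simp
    qed
  qed
qed



lemma relabel_root:
  assumes T: "is_rooted_tree I t" and r: "roots I t = {r}" and inj: "inj_on f I"
  shows "is_rooted_tree (f ` I) (map_prod f f ` t)"
    "poset_iso (nap_interval I t) (nap_interval (f ` I) (map_prod f f ` t))"
    "roots (f ` I) (map_prod f f ` t) = {f r}"
proof -
  have b: "bij_betw f I (f ` I)" using inj unfolding bij_betw_def by simp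
  show "is_rooted_tree (f ` I) (map_prod f f ` t)" using relabel(1)[OF b T refl] .
  show "poset_iso (nap_interval I t) (nap_interval (f ` I) (map_prod f f ` t))" using relabel(2)[OF b T refl] .
  show "roots (f ` I) (map_prod f f ` t) = {f r}" using relabel(3)[OF b T refl] r by simp
qed

lemma single_tree: "is_rooted_tree {0} {}"
  unfolding is_rooted_tree_def is_forest_def roots_def acyclic_def by auto

lemma nil_iso: "poset_iso (prod_posets []) (nap_interval {0} {})"
proof -
  have Fo: "is_forest {0} {}" using single_tree unfolding is_rooted_tree_def by auto
  have D: "Dn {} = {{}}" unfolding Dn_def by auto
  have car: "nap_interval {0} {} = ({{}}, nap_le {0})"
    unfolding nap_interval_def using interval_carrier[OF Fo] D by auto
  have le: "nap_le {0} {} {}" using nap_le_Dn[OF Fo] D by auto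
  have p: "prod_posets [] = ({[]}, \<lambda>xs ys. True)" unfolding prod_posets_def by auto
  show ?thesis unfolding poset_iso_def car p
    by (intro exI[of _ "\<lambda>_. {}"]) (auto simp: bij_betw_def le)
qed

lemma prod_tree:
  "\<forall>(I,t) \<in> set ts. is_rooted_tree I t \<Longrightarrow>
   \<exists>I t. is_rooted_tree I t \<and> poset_iso (prod_posets (map (\<lambda>(I, t). nap_interval I t) ts)) (nap_interval I t)"
proof (induction ts)
  case Nil
  then show ?case using single_tree nil_iso by auto
next
  case (Cons a ts)
  obtain I1 t1 where a: "a = (I1,t1)" by (cases a)
  have T1: "is_rooted_tree I1 t1" using Cons.prems a by auto
  obtain I2 t2 where T2: "is_rooted_tree I2 t2"
    and i2: "poset_iso (prod_posets (map (\<lambda>(I, t). nap_interval I t) ts)) (nap_interval I2 t2)"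
    using Cons by auto
  obtain r1 where r1: "roots I1 t1 = {r1}" using tree_root[OF T1] by blast
  obtain r2 where r2: "roots I2 t2 = {r2}" using tree_root[OF T2] by blast
  define f1 where "f1 v = (if v = r1 then 0 else 2 * v + 1)" for v :: nat
  define f2 where "f2 v = (if v = r2 then 0 else 2 * v + 2)" for v :: nat
  have inj1: "inj_on f1 I1" unfolding f1_def inj_on_def by auto
  have inj2: "inj_on f2 I2" unfolding f2_def inj_on_def by auto
  note R1 = relabel_root[OF T1 r1 inj1] and R2 = relabel_root[OF T2 r2 inj2]
  have r1I: "r1 \<in> I1" using r1 unfolding roots_def by auto
  have r2I: "r2 \<in> I2" using r2 unfolding roots_def by auto
  have int: "f1 ` I1 \<inter> f2 ` I2 = {0}"
  proof
    show "{0} \<subseteq> f1 ` I1 \<inter> f2 ` I2" using r1I r2I unfolding f1_def f2_def by force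
    show "f1 ` I1 \<inter> f2 ` I2 \<subseteq> {0}"
    proof
      fix z assume "z \<in> f1 ` I1 \<inter> f2 ` I2"
      then obtain u v where "z = f1 u" "z = f2 v" by blast
      then show "z \<in> {0}" unfolding f1_def f2_def by (auto split: if_splits) presburger+
    qed
  qed
  have f10: "f1 r1 = 0" "f2 r2 = 0" unfolding f1_def f2_def by auto
  note M = merge[OF R1(1) R2(1) R1(3)[unfolded f10] R2(3)[unfolded f10] int]
  have s1: "poset_iso (prod_posets (map (\<lambda>(I, t). nap_interval I t) (a # ts)))
      (pairP (nap_interval I1 t1) (prod_posets (map (\<lambda>(I, t). nap_interval I t) ts)))"
    using prod_cons a by simp
  have s2: "poset_iso (pairP (nap_interval I1 t1) (prod_posets (map (\<lambda>(I, t). nap_interval I t) ts))) (pairP (nap_interval (f1 ` I1) (map_prod f1 f1 ` t1))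
                                 (nap_interval (f2 ` I2) (map_prod f2 f2 ` t2)))"
    using pair_cong[OF R1(2) iso_trans[OF i2 R2(2)]] .
  have "poset_iso (prod_posets (map (\<lambda>(I, t). nap_interval I t) (a # ts)))
     (nap_interval (f1 ` I1 \<union> f2 ` I2) (map_prod f1 f1 ` t1 \<union> map_prod f2 f2 ` t2))"
    using iso_trans[OF iso_trans[OF s1 s2] M(2)] .
  then show ?case using M(1) by blast
qed


lemma module_scaleH: "module (scaleH :: 'k::field \<Rightarrow> ('c \<Rightarrow> 'k) \<Rightarrow> ('c \<Rightarrow> 'k))"
  by unfold_locales (auto simp: scaleH_def algebra_simps)

lemma sum_fun_apply: "(sum f T) x = (\<Sum>w\<in>T. f w x)"
  by (induction T rule: infinite_finite_induct) auto

lemma classes_are_trees: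
  assumes "c \<in> nap_classes"
  shows "\<exists>I t. is_rooted_tree I t \<and> c = iso_class (prod_posets [nap_interval I t])"
proof -
  obtain ts where ts: "\<forall>(I, t) \<in> set ts. is_rooted_tree I t"
    "c = iso_class (prod_posets (map (\<lambda>(I, t). nap_interval I t) ts))"
    using assms unfolding nap_classes_def nap_products_def by auto
  obtain I t where T: "is_rooted_tree I t"
    and i: "poset_iso (prod_posets (map (\<lambda>(I, t). nap_interval I t) ts)) (nap_interval I t)"
    using prod_tree[OF ts(1)] by blast
  have "poset_iso (prod_posets (map (\<lambda>(I, t). nap_interval I t) ts)) (prod_posets [nap_interval I t])"
    using iso_trans[OF i iso_sym[OF prod_single]] .
  then show ?thesis using T ts(2) iso_class_eq by blast
qed

lemma tree_class_in: "is_rooted_tree I t \<Longrightarrow> iso_class (prod_posets [nap_interval I t]) \<in> nap_classes"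
  unfolding nap_classes_def nap_products_def
  by (rule imageI, rule CollectI, rule exI[of _ "[(I,t)]"]) auto

theorem lemma6p9:
  shows "(\<forall>I t J s. is_rooted_tree I t \<longrightarrow> is_rooted_tree J s \<longrightarrow>
            ((Ftree I t :: forest list poset set \<Rightarrow> 'k::field) = Ftree J s \<longleftrightarrow> tree_iso I t J s))
     \<and> \<not> module.dependent scaleH
           {Ftree I t :: forest list poset set \<Rightarrow> 'k::field | I t. is_rooted_tree I t}
     \<and> module.span scaleH
           {Ftree I t :: forest list poset set \<Rightarrow> 'k::field | I t. is_rooted_tree I t} = H_NAP"
proof (intro conjI allI impI)
  fix I t J s assume "is_rooted_tree I t" "is_rooted_tree J s"
  then show "((Ftree I t :: forest list poset set \<Rightarrow> 'k::field) = Ftree J s \<longleftrightarrow> tree_iso I t J s)"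
    by (rule part1)
next
  interpret m: module "scaleH :: 'k \<Rightarrow> (forest list poset set \<Rightarrow> 'k) \<Rightarrow> _" by (rule module_scaleH)
  let ?B = "{Ftree I t :: forest list poset set \<Rightarrow> 'k::field | I t. is_rooted_tree I t}"
  have Bchar: "\<And>v. v \<in> ?B \<Longrightarrow> \<exists>c. v = Fbasis c \<and> c \<in> nap_classes"
    unfolding Ftree_def using tree_class_in by blast
  show "\<not> m.dependent ?B"
  proof
    assume "m.dependent ?B"
    then obtain T u v where T: "finite T" "T \<subseteq> ?B" "(\<Sum>w\<in>T. scaleH (u w) w) = 0" "v \<in> T" "u v \<noteq> 0"
      unfolding m.dependent_explicit by blast
    obtain c where c: "v = Fbasis c" using Bchar T by blast
    have "(\<Sum>w\<in>T. scaleH (u w) w) c = (\<Sum>w\<in>T. u w * w c)"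
      by (simp add: sum_fun_apply scaleH_def)
    also have "\<dots> = u v * v c + (\<Sum>w\<in>T - {v}. u w * w c)"
      using T by (simp add: sum.remove)
    also have "(\<Sum>w\<in>T - {v}. u w * w c) = 0"
    proof (rule sum.neutral, rule ballI)
      fix w assume w: "w \<in> T - {v}"
      then obtain d where d: "w = Fbasis d" using Bchar T by blast
      then have "d \<noteq> c" using w c by auto
      then show "u w * w c = 0" using d unfolding Fbasis_def by simp
    qed
    finally have "(\<Sum>w\<in>T. scaleH (u w) w) c = u v" using c unfolding Fbasis_def by simp
    then show False using T by simp
  qed
  show "m.span ?B = H_NAP"
  proof
    have sub: "m.subspace H_NAP"
    proof (rule m.subspaceI)
      show "0 \<in> H_NAP" unfolding H_NAP_def by simp
      fix x y :: "forest list poset set \<Rightarrow> 'k" assume "x \<in> H_NAP" "y \<in> H_NAP"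
      then have "finite ({c. x c \<noteq> 0} \<union> {c. y c \<noteq> 0})" "{c. x c \<noteq> 0} \<union> {c. y c \<noteq> 0} \<subseteq> nap_classes"
        unfolding H_NAP_def by auto
      moreover have "{c. (x + y) c \<noteq> 0} \<subseteq> {c. x c \<noteq> 0} \<union> {c. y c \<noteq> 0}" by auto
      ultimately have "finite {c. (x + y) c \<noteq> 0}" "{c. (x + y) c \<noteq> 0} \<subseteq> nap_classes"
        using finite_subset by blast+
      then show "x + y \<in> H_NAP" unfolding H_NAP_def by blast
    next
      fix a :: 'k and x :: "forest list poset set \<Rightarrow> 'k" assume "x \<in> H_NAP"
      moreover have "{c. scaleH a x c \<noteq> 0} \<subseteq> {c. x c \<noteq> 0}" unfolding scaleH_def by auto
      ultimately have "finite {c. scaleH a x c \<noteq> 0}" "{c. scaleH a x c \<noteq> 0} \<subseteq> nap_classes"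
        unfolding H_NAP_def using finite_subset by blast+
      then show "scaleH a x \<in> H_NAP" unfolding H_NAP_def by blast
    qed
    have "?B \<subseteq> H_NAP"
    proof
      fix v assume "v \<in> ?B"
      then obtain c where c: "v = Fbasis c" "c \<in> nap_classes" using Bchar by blast
      have "{d. v d \<noteq> 0} = {c}" using c unfolding Fbasis_def by auto
      then show "v \<in> H_NAP" using c unfolding H_NAP_def by simp
    qed
    then show "m.span ?B \<subseteq> H_NAP" using m.span_minimal sub by blast
  next
    show "H_NAP \<subseteq> m.span ?B"
    proof
      fix f :: "forest list poset set \<Rightarrow> 'k" assume f: "f \<in> H_NAP"
      let ?S = "{c. f c \<noteq> 0}"
      have S: "finite ?S" "?S \<subseteq> nap_classes" using f unfolding H_NAP_def by auto
      have inB: "Fbasis c \<in> ?B" if cS: "c \<in> ?S" for c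
      proof -
        obtain I t where "is_rooted_tree I t" "c = iso_class (prod_posets [nap_interval I t])"
          using classes_are_trees S(2) cS by blast
        then show ?thesis unfolding Ftree_def by blast
      qed
      have eq: "f = (\<Sum>c\<in>?S. scaleH (f c) (Fbasis c))"
      proof
        fix d
        have "(\<Sum>c\<in>?S. scaleH (f c) (Fbasis c)) d = (\<Sum>c\<in>?S. f c * Fbasis c d)"
          by (simp add: sum_fun_apply scaleH_def)
        also have "\<dots> = f d"
        proof (cases "d \<in> ?S")
          case True
          then have "(\<Sum>c\<in>?S. f c * Fbasis c d) = f d * Fbasis d d + (\<Sum>c\<in>?S - {d}. f c * Fbasis c d)"
            using S(1) by (simp add: sum.remove)
          moreover have "(\<Sum>c\<in>?S - {d}. f c * Fbasis c d) = 0"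
            by (rule sum.neutral) (auto simp: Fbasis_def)
          ultimately show ?thesis by (simp add: Fbasis_def)
        next
          case False
          then have "(\<Sum>c\<in>?S. f c * Fbasis c d) = 0"
            by (intro sum.neutral) (auto simp: Fbasis_def)
          then show ?thesis using False by simp
        qed
        finally show "f d = (\<Sum>c\<in>?S. scaleH (f c) (Fbasis c)) d" by simp
      qed
      have "(\<Sum>c\<in>?S. scaleH (f c) (Fbasis c)) \<in> m.span ?B"
      proof (rule m.span_sum)
        fix c assume "c \<in> ?S"
        then have "Fbasis c \<in> m.span ?B" using inB m.span_base by blast
        then show "scaleH (f c) (Fbasis c) \<in> m.span ?B" by (rule m.span_scale)
      qed
      then show "f \<in> m.span ?B" using eq by simp
    qed
  qed
qed

end
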